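(* Let $\mu\ge 2$ and $\lambda\ge 1$ be integers and let $N$ be a positive integer with $\log_2 N\ge 8\mu^2+\log_2(2\mu)\cdot\lambda$. Then for every positive integer $m$ and every $\mu$-linear polynomial $f\in\mathbb{Z}[X_1,\dots,X_\mu]$ co-prime to $N$, $$\Pr_{\mathbf{x}\leftarrow\{0,\dots,m-1\}^\mu}\big[f(\mathbf{x})\equiv 0\pmod N\big]\le 2^{-\lambda}+\frac{\mu}{m},$$ where $\mathbf{x}$ is uniform on $\{0,\dots,m-1\}^\mu$.
   Context: A polynomial $f\in\mathbb{Z}[X_1,\dots,X_\mu]$ is $\mu$-linear (multilinear) if it has degree at most $1$ in each variable. $f$ is co-prime to $N$ if the greatest common divisor of $N$ and all coefficients of $f$ equals $1$. *)

theory Defs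
  imports Complex_Main "HOL-Library.FuncSet"
begin

text \<open>A mu-linear polynomial in Z[X_0,...,X_(mu-1)] is given by its coefficient function
  c on subsets S of {0..<mu}: the coefficient of the monomial prod_(i in S) X_i.\<close>

definition mlin_eval :: "nat \<Rightarrow> (nat set \<Rightarrow> int) \<Rightarrow> (nat \<Rightarrow> int) \<Rightarrow> int" where
  "mlin_eval \<mu> c x = (\<Sum>S\<in>Pow {0..<\<mu>}. c S * (\<Prod>i\<in>S. x i))"

definition mlin_coprime_to :: "nat \<Rightarrow> (nat set \<Rightarrow> int) \<Rightarrow> int \<Rightarrow> bool" where
  "mlin_coprime_to \<mu> c N \<longleftrightarrow> Gcd (insert N (c ` Pow {0..<\<mu>})) = 1"

end

theory Submission
  imports Defs "HOL-Number_Theory.Number_Theory"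
begin

fun tau :: "nat \<Rightarrow> nat \<Rightarrow> nat" where
  "tau 0 s = (if s = 1 then 1 else 0)"
| "tau (Suc k) s = (\<Sum>e | e dvd s. tau k e)"

lemma tau_primepow:
  assumes p: "prime p"
  shows "tau (Suc k) (p ^ a) = (a + k) choose a"
proof (induction k arbitrary: a)
  case 0
  have "(\<Sum>e | e dvd p ^ a. tau 0 e) = (\<Sum>e | e dvd p ^ a. (if e = 1 then 1 else 0))"
    by (intro sum.cong) auto
  also have "\<dots> = 1"
    using p by (subst sum.delta) (auto intro: finite_divisors_nat simp: prime_gt_0_nat)
  finally show ?case by simp
next
  case (Suc k)
  have eq: "{e. e dvd p ^ a} = (\<lambda>j. p ^ j) ` {..a}"
    using divides_primepow_nat[OF p] by auto
  have inj: "inj_on (\<lambda>j. p ^ j) {..a}"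
    using prime_gt_1_nat[OF p] by (intro inj_onI) (simp add: power_inject_exp)
  have "tau (Suc (Suc k)) (p ^ a) = (\<Sum>e\<in>(\<lambda>j. p ^ j) ` {..a}. tau (Suc k) e)"
    by (simp add: eq)
  also have "\<dots> = (\<Sum>j\<le>a. tau (Suc k) (p ^ j))"
    by (subst sum.reindex[OF inj]) simp
  also have "\<dots> = (\<Sum>j\<le>a. (k + j) choose j)"
    using Suc.IH by (simp add: add.commute)
  also have "\<dots> = (a + Suc k) choose a"
    by (subst sum_choose_lower) (simp add: add.commute)
  finally show ?case .
qed

lemma tau_mult_coprime:
  assumes "coprime a b" "a > 0" "b > 0"
  shows "tau k (a * b) \<le> tau k a * tau k b"
  using assms
proof (induction k arbitrary: a b)
  case 0
  then show ?case by auto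
next
  case (Suc k)
  let ?D = "{x. x dvd a} \<times> {y. y dvd b}"
  have fin: "finite ?D" using Suc.prems by (auto intro: finite_divisors_nat)
  have eq: "{e. e dvd a * b} = (\<lambda>(x,y). x * y) ` ?D"
  proof
    show "{e. e dvd a * b} \<subseteq> (\<lambda>(x,y). x * y) ` ?D"
    proof
      fix e assume "e \<in> {e. e dvd a * b}"
      then obtain x y where "e = x * y" "x dvd a" "y dvd b"
        using division_decomp[of e a b] by auto
      then show "e \<in> (\<lambda>(x,y). x * y) ` ?D" by force
    qed
    show "(\<lambda>(x,y). x * y) ` ?D \<subseteq> {e. e dvd a * b}"
      by (auto intro: mult_dvd_mono)
  qed
  have "tau (Suc k) (a * b) = (\<Sum>e\<in>(\<lambda>(x,y). x * y) ` ?D. tau k e)"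
    by (simp add: eq)
  also have "\<dots> \<le> (\<Sum>z\<in>?D. tau k (fst z * snd z))"
    using sum_image_le[OF fin, of "tau k" "\<lambda>(x,y). x * y"]
    by (simp add: case_prod_beta comp_def)
  also have "\<dots> \<le> (\<Sum>z\<in>?D. tau k (fst z) * tau k (snd z))"
  proof (rule sum_mono)
    fix z assume z: "z \<in> ?D"
    then have "fst z dvd a" "snd z dvd b" by auto
    moreover have "fst z > 0" "snd z > 0"
      using z Suc.prems by (auto intro: dvd_pos_nat)
    ultimately show "tau k (fst z * snd z) \<le> tau k (fst z) * tau k (snd z)"
      using Suc.IH Suc.prems coprime_divisors by blast
  qed
  also have "\<dots> = tau (Suc k) a * tau (Suc k) b"
    by (simp add: sum_product sum.cartesian_product case_prod_beta)
  finally show ?case .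
qed


lemma choose_le_pow: "(a + k) choose a \<le> (Suc k) ^ a"
proof (induction a)
  case 0 then show ?case by simp
next
  case (Suc a)
  have "Suc a * (Suc (a + k) choose Suc a) = Suc (a + k) * ((a + k) choose a)"
    by (rule Suc_times_binomial)
  also have "\<dots> \<le> Suc (a + k) * (Suc k) ^ a"
    using Suc.IH by (intro mult_le_mono2)
  also have "\<dots> \<le> (Suc a * Suc k) * (Suc k) ^ a"
    by (intro mult_right_mono) auto
  finally have "Suc a * (Suc (a + k) choose Suc a) \<le> Suc a * ((Suc k) ^ Suc a)"
    by (simp add: algebra_simps)
  then show ?case by (metis add_Suc mult_le_cancel1 zero_less_Suc)
qed

lemma binom_term:
  fixes r :: real
  assumes "0 \<le> r" "r \<le> 1"
  shows "real ((a + k) choose a) * r ^ a * (1 - r) ^ k \<le> 1"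
proof -
  have "(1::real) = (r + (1 - r)) ^ (a + k)" by simp
  also have "\<dots> = (\<Sum>i\<le>a + k. real ((a + k) choose i) * r ^ i * (1 - r) ^ (a + k - i))"
    by (rule binomial_ring)
  also have "\<dots> \<ge> real ((a + k) choose a) * r ^ a * (1 - r) ^ (a + k - a)"
    by (rule member_le_sum) (use assms in auto)
  finally show ?thesis by simp
qed

lemma telescope:
  "3 \<le> M \<Longrightarrow> (\<Prod>n\<in>{3..<M}. real n / (real n - 2)) = real (M - 1) * real (M - 2) / 2"
proof (induction M rule: nat_induct_at_least)
  case base then show ?case by simp
next
  case (Suc M)
  have "(\<Prod>n\<in>{3..<Suc M}. real n / (real n - 2)) = (\<Prod>n\<in>{3..<M}. real n / (real n - 2)) * (real M / (real M - 2))"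
    using Suc by (simp add: atLeastLessThanSuc)
  also have "\<dots> = real (M - 1) * real (M - 2) / 2 * (real M / (real M - 2))"
    unfolding Suc.IH by (rule refl)
  also have "\<dots> = real (Suc M - 1) * real (Suc M - 2) / 2"
    using Suc by (simp add: of_nat_diff field_simps)
  finally show ?case .
qed

lemma aux_pow1: "3 \<le> K \<Longrightarrow> 4 * K + 3 \<le> (2::nat) ^ (K + 1)"
proof (induction K rule: nat_induct_at_least)
  case base then show ?case by simp
next
  case (Suc K) then show ?case by simp
qed

lemma aux_pow2: "K * (2 * K + 1) \<le> (2::nat) ^ (K + 1) + 8"
proof (induction K)
  case 0 then show ?case by simp
next
  case (Suc K)
  show ?case
  proof (cases "K \<le> 2")
    case True
    then have "K = 0 \<or> K = 1 \<or> K = 2" by auto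
    then show ?thesis by auto
  next
    case False
    then have "4 * K + 3 \<le> 2 ^ (K + 1)" by (intro aux_pow1) auto
    then show ?thesis using Suc.IH by (simp add: algebra_simps)
  qed
qed


definition LL :: "nat \<Rightarrow> real" where "LL k = log 2 (2 * real (Suc k))"
definition eps :: "nat \<Rightarrow> real" where "eps k = 1 - 1 / LL k"
definition ww :: "nat \<Rightarrow> nat \<Rightarrow> real" where
  "ww k n = (if 2 * Suc k \<le> n then 1 else (1 / (1 - real n powr (- eps k))) ^ k)"

lemma LL_ge2: "k \<ge> 1 \<Longrightarrow> LL k \<ge> 2"
proof -
  assume "k \<ge> 1"
  then have "(2::real) powr 2 \<le> 2 * real (Suc k)" by simp
  then show ?thesis unfolding LL_def by (subst le_log_iff) auto
qed

lemma two_mu_pow: "(2 * real (Suc k)) powr (1 / LL k) = 2"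
proof -
  have L: "LL k > 0" unfolding LL_def by simp
  have "2 * real (Suc k) = 2 powr LL k" unfolding LL_def by simp
  then have "(2 * real (Suc k)) powr (1 / LL k) = 2 powr (LL k * (1 / LL k))"
    by (simp add: powr_powr)
  also have "\<dots> = 2" using L by simp
  finally show ?thesis .
qed

lemma eps_bounds: "k \<ge> 1 \<Longrightarrow> 1/2 \<le> eps k \<and> eps k < 1"
proof -
  assume "k \<ge> 1"
  then have "LL k \<ge> 2" by (rule LL_ge2)
  then show ?thesis unfolding eps_def by (auto simp: field_simps)
qed

lemma small_pow: "1 \<le> x \<Longrightarrow> x \<le> 2 * real (Suc k) \<Longrightarrow> x powr (1 / LL k) \<le> 2"
proof -
  assume "1 \<le> x" "x \<le> 2 * real (Suc k)"
  moreover have "LL k > 0" unfolding LL_def by simp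
  ultimately have "x powr (1 / LL k) \<le> (2 * real (Suc k)) powr (1 / LL k)"
    by (intro powr_mono2) auto
  then show ?thesis using two_mu_pow by simp
qed

lemma powr_eps: "x > 0 \<Longrightarrow> x powr eps k = x / x powr (1 / LL k)"
  unfolding eps_def by (simp add: powr_diff)

lemma mu_le: "k \<ge> 1 \<Longrightarrow> 2 * real (Suc k) \<le> x \<Longrightarrow> real (Suc k) \<le> x powr eps k"
proof -
  assume k: "k \<ge> 1" and x: "2 * real (Suc k) \<le> x"
  have "(2 * real (Suc k)) powr eps k \<le> x powr eps k"
    using eps_bounds[OF k] x by (intro powr_mono2) auto
  moreover have "(2 * real (Suc k)) powr eps k = real (Suc k)"
    using powr_eps[of "2 * real (Suc k)" k] two_mu_pow[of k] by simp
  ultimately show ?thesis by simp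
qed

lemma ww_ge1: "k \<ge> 1 \<Longrightarrow> 2 \<le> n \<Longrightarrow> 1 \<le> ww k n"
proof -
  assume k: "k \<ge> 1" and n: "2 \<le> n"
  have "real n powr (- eps k) < 1"
    using eps_bounds[OF k] n by (intro powr_less_one) auto
  moreover have "0 < real n powr (- eps k)" using n by simp
  ultimately have "1 \<le> 1 / (1 - real n powr (- eps k))" by (simp add: field_simps)
  then show ?thesis unfolding ww_def by (auto intro: one_le_power)
qed

lemma pp_bound:
  assumes k: "k \<ge> 1" and p: "prime p"
  shows "real (tau (Suc k) (p ^ a)) \<le> real (p ^ a) powr eps k * ww k p"
proof -
  have p2: "real p \<ge> 2" using prime_ge_2_nat[OF p] by simp
  have t: "real (tau (Suc k) (p ^ a)) = real ((a + k) choose a)"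
    using tau_primepow[OF p] by simp
  have pa: "real (p ^ a) powr eps k = (real p powr eps k) ^ a"
    using p2 by (simp add: powr_realpow[symmetric] powr_powr mult.commute)
  show ?thesis
  proof (cases "2 * Suc k \<le> p")
    case True
    then have "2 * real (Suc k) \<le> real p" by linarith
    then have m: "real (Suc k) \<le> real p powr eps k" by (rule mu_le[OF k])
    have "real ((a + k) choose a) \<le> real (Suc k) ^ a"
      using choose_le_pow[of a k] by (metis of_nat_le_iff of_nat_power)
    also have "\<dots> \<le> (real p powr eps k) ^ a"
      using m by (intro power_mono) auto
    finally show ?thesis using True t pa by (simp add: ww_def)
  next
    case False
    let ?r = "real p powr (- eps k)"
    have r0: "0 < ?r" using p2 by simp
    have r1: "?r < 1" using eps_bounds[OF k] p2 by (intro powr_less_one) auto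
    have "real ((a + k) choose a) * ?r ^ a * (1 - ?r) ^ k \<le> 1"
      using r0 r1 by (intro binom_term) auto
    moreover have "?r ^ a * (real p powr eps k) ^ a = 1"
      using p2 by (simp add: power_mult_distrib[symmetric] powr_add[symmetric])
    moreover have "(1 - ?r) ^ k * (1 / (1 - ?r)) ^ k = 1"
      using r1 by (simp add: power_mult_distrib[symmetric])
    ultimately have "real ((a + k) choose a) \<le> (real p powr eps k) ^ a * (1 / (1 - ?r)) ^ k"
    proof -
      assume h1: "real ((a + k) choose a) * ?r ^ a * (1 - ?r) ^ k \<le> 1"
        and h2: "?r ^ a * (real p powr eps k) ^ a = 1"
        and h3: "(1 - ?r) ^ k * (1 / (1 - ?r)) ^ k = 1"
      let ?C = "real ((a + k) choose a)" and ?P = "(real p powr eps k) ^ a" and ?Q = "(1 / (1 - ?r)) ^ k"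
      have "?C = (?C * ?r ^ a * (1 - ?r) ^ k) * (?P * ?Q)"
        using h2 h3 by (simp add: algebra_simps)
      also have "\<dots> \<le> 1 * (?P * ?Q)"
        using h1 r1 by (intro mult_right_mono) auto
      finally show ?thesis by simp
    qed
    then show ?thesis using False t pa by (simp add: ww_def)
  qed
qed


lemma tau_one: "tau k 1 = 1"
proof (induction k)
  case 0 then show ?case by simp
next
  case (Suc k)
  have "{e. e dvd (1::nat)} = {1}" by auto
  then show ?case using Suc by simp
qed

lemma set_bound:
  assumes k: "k \<ge> 1" and fin: "finite S" and pr: "\<forall>p\<in>S. prime p"
  shows "real (tau (Suc k) (\<Prod>p\<in>S. p ^ f p)) \<le> real (\<Prod>p\<in>S. p ^ f p) powr eps k * (\<Prod>p\<in>S. ww k p)"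
  using fin pr
proof (induction S rule: finite_induct)
  case empty
  have "tau k (Suc 0) = Suc 0" using tau_one[of k] by simp
  then show ?case by simp
next
  case (insert p S)
  let ?A = "p ^ f p" and ?B = "\<Prod>q\<in>S. q ^ f q"
  have pp: "prime p" using insert by auto
  have A0: "?A > 0" using pp by (simp add: prime_gt_0_nat)
  have B0: "?B > 0" using insert by (auto intro!: prod_pos simp: prime_gt_0_nat)
  have cop: "coprime ?A ?B"
  proof (rule prod_coprime_right)
    fix q assume q: "q \<in> S"
    then have "p \<noteq> q" using insert by auto
    moreover have "prime q" using q insert by auto
    ultimately have "coprime p q" using pp by (simp add: primes_coprime)
    then show "coprime (p ^ f p) (q ^ f q)" by simp
  qed
  have "real (tau (Suc k) (\<Prod>q\<in>insert p S. q ^ f q)) = real (tau (Suc k) (?A * ?B))"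
    using insert by simp
  also have "\<dots> \<le> real (tau (Suc k) ?A) * real (tau (Suc k) ?B)"
    using tau_mult_coprime[OF cop A0 B0] by (metis of_nat_le_iff of_nat_mult)
  also have "\<dots> \<le> (real ?A powr eps k * ww k p) * (real ?B powr eps k * (\<Prod>q\<in>S. ww k q))"
  proof (rule mult_mono)
    show "real (tau (Suc k) ?A) \<le> real ?A powr eps k * ww k p" by (rule pp_bound[OF k pp])
    show "real (tau (Suc k) ?B) \<le> real ?B powr eps k * (\<Prod>q\<in>S. ww k q)"
      using insert by auto
    show "0 \<le> real ?A powr eps k * ww k p"
      using ww_ge1[OF k, of p] prime_ge_2_nat[OF pp] by simp
    show "0 \<le> real (tau (Suc k) ?B)" by (simp only: of_nat_0_le_iff)
  qed
  also have "\<dots> = real (?A * ?B) powr eps k * (ww k p * (\<Prod>q\<in>S. ww k q))"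
    by (simp add: powr_mult)
  also have "\<dots> = real (\<Prod>q\<in>insert p S. q ^ f q) powr eps k * (\<Prod>q\<in>insert p S. ww k q)"
    using insert by simp
  finally show ?case .
qed

lemma g_bound:
  assumes k: "k \<ge> 1" and n: "3 \<le> n" "n < 2 * Suc k"
  shows "1 / (1 - real n powr (- eps k)) \<le> real n / (real n - 2)"
proof -
  have n3: "real n \<ge> 3" using n by simp
  have "real n powr (1 / LL k) \<le> 2" using n by (intro small_pow) auto
  moreover have "real n powr (1 / LL k) > 0" using n3 by simp
  ultimately have "real n powr eps k \<ge> real n / 2"
    using n3 by (subst powr_eps) (auto simp: field_simps)
  then have "real n powr (- eps k) \<le> 2 / real n"
    using n3 by (simp add: powr_minus field_simps)
  then have "1 - real n powr (- eps k) \<ge> (real n - 2) / real n"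
    using n3 by (simp add: field_simps)
  moreover have "(real n - 2) / real n > 0" using n3 by simp
  ultimately have "1 / (1 - real n powr (- eps k)) \<le> 1 / ((real n - 2) / real n)"
    by (intro divide_left_mono mult_pos_pos) auto
  then show ?thesis by simp
qed

lemma g2_bound:
  assumes k: "k \<ge> 1"
  shows "1 / (1 - 2 powr (- eps k)) \<le> 4"
proof -
  have e: "1/2 \<le> eps k" using eps_bounds[OF k] by simp
  have "(2::real) powr (- eps k) \<le> 2 powr (- (1/2))"
    by (rule powr_mono) (use e in auto)
  also have "(2::real) powr (- (1/2)) = inverse (sqrt 2)"
    by (simp only: powr_minus powr_half_sqrt[of 2, simplified])
  also have "inverse (sqrt 2) \<le> (3 / 4 :: real)"
  proof -
    have "(4/3::real) \<le> sqrt 2" by (rule real_le_rsqrt) (simp add: power2_eq_square)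
    then show ?thesis by (simp add: field_simps)
  qed
  finally have h: "2 powr (- eps k) \<le> (3/4::real)" .
  have "0 < 2 powr (- eps k)" by simp
  then show ?thesis using h by (simp add: field_simps)
qed

lemma Q_bound:
  assumes k: "k \<ge> 1"
  shows "(\<Prod>n\<in>{2..<2 * Suc k}. ww k n) \<le> (8 * real (Suc k) ^ 2) ^ k"
proof -
  let ?g = "\<lambda>n. 1 / (1 - real n powr (- eps k))"
  have g0: "\<And>n. 2 \<le> n \<Longrightarrow> 0 \<le> ?g n"
  proof -
    fix n :: nat assume "2 \<le> n"
    then have "real n powr (- eps k) < 1"
      using eps_bounds[OF k] by (intro powr_less_one) auto
    then show "0 \<le> ?g n" by simp
  qed
  have "(\<Prod>n\<in>{2..<2 * Suc k}. ww k n) = (\<Prod>n\<in>{2..<2 * Suc k}. ?g n ^ k)"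
    by (intro prod.cong) (auto simp: ww_def)
  also have "\<dots> = (\<Prod>n\<in>{2..<2 * Suc k}. ?g n) ^ k"
    by (rule prod_power_distrib[symmetric])
  also have "\<dots> \<le> (8 * real (Suc k) ^ 2) ^ k"
  proof (rule power_mono)
    have split: "{2..<2 * Suc k} = insert 2 {3..<2 * Suc k}" using k by auto
    have "(\<Prod>n\<in>{2..<2 * Suc k}. ?g n) = ?g 2 * (\<Prod>n\<in>{3..<2 * Suc k}. ?g n)"
      unfolding split by (rule prod.insert) auto
    also have "\<dots> \<le> 4 * (\<Prod>n\<in>{3..<2 * Suc k}. real n / (real n - 2))"
    proof (rule mult_mono)
      show "?g 2 \<le> 4" using g2_bound[OF k] by simp
      show "(\<Prod>n\<in>{3..<2 * Suc k}. ?g n) \<le> (\<Prod>n\<in>{3..<2 * Suc k}. real n / (real n - 2))"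
        by (intro prod_mono conjI g0 g_bound[OF k]) auto
      show "0 \<le> (4::real)" by simp
      show "0 \<le> (\<Prod>n\<in>{3..<2 * Suc k}. ?g n)" by (intro prod_nonneg g0) auto
    qed
    also have "\<dots> = 4 * (real (2 * Suc k - 1) * real (2 * Suc k - 2) / 2)"
      using k by (subst telescope) auto
    also have "\<dots> \<le> 8 * real (Suc k) ^ 2"
      using k by (simp add: of_nat_diff power2_eq_square algebra_simps)
    finally show "(\<Prod>n\<in>{2..<2 * Suc k}. ?g n) \<le> 8 * real (Suc k) ^ 2" .
    show "0 \<le> (\<Prod>n\<in>{2..<2 * Suc k}. ?g n)" by (intro prod_nonneg g0) auto
  qed
  finally show ?thesis .
qed

lemma tau_bound:
  assumes k: "k \<ge> 1" and D: "D > 0"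
  shows "real (tau (Suc k) D) \<le> real D powr eps k * (8 * real (Suc k) ^ 2) ^ k"
proof -
  let ?P = "prime_factors D"
  have Deq: "(\<Prod>p\<in>?P. p ^ multiplicity p D) = D"
    using prod_prime_factors[of D] D by simp
  have t: "real (tau (Suc k) D) \<le> real D powr eps k * (\<Prod>p\<in>?P. ww k p)"
    using set_bound[OF k, of ?P "\<lambda>p. multiplicity p D"] Deq by auto
  have "(\<Prod>p\<in>?P. ww k p) = (\<Prod>p\<in>?P \<inter> {2..<2 * Suc k}. ww k p)"
  proof (rule prod.mono_neutral_right)
    show "\<forall>i\<in>?P - ?P \<inter> {2..<2 * Suc k}. ww k i = 1"
    proof
      fix i assume i: "i \<in> ?P - ?P \<inter> {2..<2 * Suc k}"
      then have "prime i" "i \<notin> {2..<2 * Suc k}" by auto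
      then have "2 * Suc k \<le> i" using prime_ge_2_nat[of i] by fastforce
      then show "ww k i = 1" by (simp add: ww_def)
    qed
  qed auto
  also have "\<dots> \<le> (\<Prod>n\<in>{2..<2 * Suc k}. ww k n)"
    by (rule prod_mono2) (auto intro: ww_ge1[OF k] order.trans[OF zero_le_one ww_ge1[OF k]])
  also have "\<dots> \<le> (8 * real (Suc k) ^ 2) ^ k" by (rule Q_bound[OF k])
  finally have q: "(\<Prod>p\<in>?P. ww k p) \<le> (8 * real (Suc k) ^ 2) ^ k" .
  have "real D powr eps k * (\<Prod>p\<in>?P. ww k p) \<le> real D powr eps k * (8 * real (Suc k) ^ 2) ^ k"
    by (rule mult_left_mono[OF q]) simp
  with t show ?thesis by (rule order.trans)
qed


lemma KL_bound:
  assumes k: "k \<ge> 1"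
  shows "real k * (LL k * (2 * LL k + 1)) \<le> 8 * real (Suc k) ^ 2"
proof -
  let ?L = "LL k"
  define K where "K = nat \<lceil>?L\<rceil>"
  have L2: "?L \<ge> 2" by (rule LL_ge2[OF k])
  have LK: "?L \<le> real K" unfolding K_def using L2 by linarith
  have K2: "K \<ge> 2" using LK L2 by linarith
  have "real K - 1 < ?L" unfolding K_def using L2 by linarith
  then have "2 powr (real K - 1) < 2 powr ?L" by simp
  moreover have "2 powr ?L = 2 * real (Suc k)" unfolding LL_def by simp
  moreover have "2 powr (real K - 1) = real (2 ^ (K - 1))"
    using K2 by (simp add: powr_realpow[symmetric] of_nat_diff)
  ultimately have "real (2 ^ (K - 1)) < real (2 * Suc k)" by simp
  then have "2 ^ (K - 1) < 2 * Suc k" by (simp only: of_nat_less_iff)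
  moreover obtain J where J: "K = J + 2" using K2 by (intro that[of "K - 2"]) simp
  ultimately have "2 * 2 ^ J < 2 * Suc k" by simp
  then have "2 ^ J < Suc k" by simp
  then have "8 * 2 ^ J + 8 \<le> 8 * Suc k" by simp
  moreover have "(2::nat) ^ (K + 1) = 8 * 2 ^ J" using J by (simp add: power_add)
  ultimately have "K * (2 * K + 1) \<le> 8 * Suc k"
    using aux_pow2[of K] by linarith
  then have "real (K * (2 * K + 1)) \<le> real (8 * Suc k)" by (simp only: of_nat_le_iff)
  then have kk: "real K * (2 * real K + 1) \<le> 8 * real (Suc k)" by (simp add: algebra_simps)
  have "?L * (2 * ?L + 1) \<le> real K * (2 * real K + 1)"
    using LK L2 by (intro mult_mono) auto
  also have "\<dots> \<le> 8 * real (Suc k)" by (rule kk)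
  finally have "?L * (2 * ?L + 1) \<le> 8 * real (Suc k)" .
  then have "real k * (?L * (2 * ?L + 1)) \<le> real k * (8 * real (Suc k))"
    by (intro mult_left_mono) auto
  also have "\<dots> \<le> 8 * real (Suc k) ^ 2"
    by (simp add: power2_eq_square algebra_simps)
  finally show ?thesis .
qed

lemma tau_ratio:
  assumes k: "k \<ge> 1" and D: "D > 0"
    and h: "log 2 (real D) \<ge> 8 * real (Suc k) ^ 2 + LL k * real lam"
  shows "real (tau (Suc k) D) / real D \<le> 2 powr (- real lam)"
proof -
  let ?L = "LL k"
  have L2: "?L \<ge> 2" by (rule LL_ge2[OF k])
  have Dp: "real D > 0" using D by simp
  have f1: "real (tau (Suc k) D) / real D \<le> real D powr eps k * (8 * real (Suc k) ^ 2) ^ k / real D"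
    using tau_bound[OF k D] Dp by (intro divide_right_mono) auto
  have f2: "real D powr eps k / real D = real D powr (- 1 / ?L)"
  proof -
    have "real D powr eps k = real D powr 1 / real D powr (1 / ?L)"
      unfolding eps_def by (rule powr_diff)
    then show ?thesis using Dp by (simp add: powr_minus divide_inverse)
  qed
  have f3: "real D powr (- 1 / ?L) = 2 powr (log 2 (real D) * (- 1 / ?L))"
  proof -
    have "real D = 2 powr log 2 (real D)" using Dp by simp
    then have "real D powr (- 1 / ?L) = (2 powr log 2 (real D)) powr (- 1 / ?L)" by simp
    then show ?thesis by (simp only: powr_powr)
  qed
  have f4: "8 * real (Suc k) ^ 2 = 2 powr (2 * ?L + 1)"
  proof -
    have a: "2 powr ?L = 2 * real (Suc k)" unfolding LL_def by simp
    have b: "(2 powr ?L) powr 2 = 2 powr (?L * 2)" by (rule powr_powr)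
    have c: "(2 powr ?L) powr 2 = (2 powr ?L) ^ 2" by (rule powr_numeral) simp
    have d: "2 powr (2 * ?L + 1) = 2 powr (?L * 2) * 2 powr 1" by (simp only: powr_add mult.commute)
    have "2 powr (2 * ?L + 1) = (2 * real (Suc k)) ^ 2 * 2"
      using a b c d by simp
    then show ?thesis by (simp add: power2_eq_square algebra_simps)
  qed
  have f5: "(2 powr (2 * ?L + 1)) ^ k = 2 powr (real k * (2 * ?L + 1))"
    by (simp add: powr_realpow[symmetric] powr_powr mult.commute)
  have f6: "2 powr (log 2 (real D) * (- 1 / ?L)) * 2 powr (real k * (2 * ?L + 1))
      = 2 powr (real k * (2 * ?L + 1) - log 2 (real D) / ?L)"
    by (simp add: powr_add[symmetric])
  have f7: "2 powr (real k * (2 * ?L + 1) - log 2 (real D) / ?L) \<le> 2 powr (- real lam)"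
  proof (rule powr_mono)
    have kl: "real k * (?L * (2 * ?L + 1)) \<le> 8 * real (Suc k) ^ 2" by (rule KL_bound[OF k])
    have "real k * (2 * ?L + 1) * ?L \<le> log 2 (real D) - ?L * real lam"
      using kl h by (simp add: algebra_simps)
    then have "real k * (2 * ?L + 1) \<le> (log 2 (real D) - ?L * real lam) / ?L"
      using L2 by (simp add: field_simps)
    also have "\<dots> = log 2 (real D) / ?L - real lam"
      using L2 by (simp add: field_simps)
    finally show "real k * (2 * ?L + 1) - log 2 (real D) / ?L \<le> - real lam" by simp
  qed simp
  have "real D powr eps k * (8 * real (Suc k) ^ 2) ^ k / real D
      = (real D powr eps k / real D) * (8 * real (Suc k) ^ 2) ^ k" by simp
  also have "\<dots> = 2 powr (real k * (2 * ?L + 1) - log 2 (real D) / ?L)"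
    unfolding f2 f3 f4 f5 f6 ..
  finally show ?thesis using f1 f7 by linarith
qed


lemma L1:
  fixes a b :: "'c \<Rightarrow> int"
  assumes finP: "finite P" and s: "s > 0"
  shows "real (card {y \<in> {0..<int m}. \<forall>c\<in>P. int s dvd a c + y * b c})
         \<le> 1 + real m * of_int (Gcd (insert (int s) (a ` P \<union> b ` P))) / real s"
proof -
  let ?S = "{y \<in> {0..<int m}. \<forall>c\<in>P. int s dvd a c + y * b c}"
  let ?G = "Gcd (insert (int s) (a ` P \<union> b ` P))"
  have G0: "0 \<le> ?G" by simp
  have Gdvd: "?G dvd int s" by (rule Gcd_dvd) simp
  have Gpos: "0 < ?G" using G0 Gdvd s by (cases "?G = 0") auto
  show ?thesis
  proof (cases "?S = {}")
    case True
    then have "real (card ?S) = 0" by (simp only: card.empty of_nat_0)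
    moreover have "0 \<le> real m * of_int ?G / real s" using G0 by simp
    ultimately show ?thesis by linarith
  next
    case False
    then obtain y0 where y0: "y0 \<in> ?S" by blast
    let ?Gb = "Gcd (insert (int s) (b ` P))"
    have Gb0: "0 \<le> ?Gb" by simp
    have Gbdvd: "?Gb dvd int s" by (rule Gcd_dvd) simp
    have Gbpos: "0 < ?Gb" using Gb0 Gbdvd s by (cases "?Gb = 0") auto
    define t where "t = int s div ?Gb"
    have st: "int s = t * ?Gb" unfolding t_def using Gbdvd by simp
    have tpos: "t > 0"
    proof -
      have "0 < t * ?Gb" using st s by linarith
      then show ?thesis using Gbpos zero_less_mult_pos2 by blast
    qed
    have key: "t dvd y - y0" if y: "y \<in> ?S" for y
    proof -
      have "\<forall>z\<in>(*) (y - y0) ` insert (int s) (b ` P). int s dvd z"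
      proof
        fix z assume "z \<in> (*) (y - y0) ` insert (int s) (b ` P)"
        then obtain w where w: "w \<in> insert (int s) (b ` P)" "z = (y - y0) * w" by auto
        show "int s dvd z"
        proof (cases "w = int s")
          case True then show ?thesis using w by simp
        next
          case False
          then obtain c where c: "c \<in> P" "w = b c" using w by auto
          have "int s dvd a c + y * b c" using y c by auto
          moreover have "int s dvd a c + y0 * b c" using y0 c by auto
          ultimately have "int s dvd (a c + y * b c) - (a c + y0 * b c)" by (rule dvd_diff)
          moreover have "(a c + y * b c) - (a c + y0 * b c) = (y - y0) * b c" by (simp add: algebra_simps)
          ultimately show ?thesis using w c by simp
        qed
      qed
      then have h1: "int s dvd Gcd ((*) (y - y0) ` insert (int s) (b ` P))"
        by (simp only: dvd_Gcd_iff)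
      have eq: "Gcd ((*) (y - y0) ` insert (int s) (b ` P)) = normalize ((y - y0) * ?Gb)"
        by (rule Gcd_mult)
      from h1 have "int s dvd normalize ((y - y0) * ?Gb)" unfolding eq .
      then have "int s dvd (y - y0) * ?Gb" by (simp only: dvd_normalize_iff)
      then have "t * ?Gb dvd (y - y0) * ?Gb" using st by simp
      then show "t dvd y - y0" using Gbpos s by simp
    qed
    have inj: "inj_on (\<lambda>y. y div t) ?S"
    proof (rule inj_onI)
      fix y1 y2 assume y1: "y1 \<in> ?S" and y2: "y2 \<in> ?S" and e: "y1 div t = y2 div t"
      have "t dvd (y1 - y0) - (y2 - y0)" using key[OF y1] key[OF y2] by (rule dvd_diff)
      then have "t dvd y1 - y2" by simp
      then have "y1 mod t = y2 mod t" by (simp add: mod_eq_dvd_iff)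
      then show "y1 = y2" using e by (metis div_mult_mod_eq)
    qed
    have sub: "(\<lambda>y. y div t) ` ?S \<subseteq> {0..(int m - 1) div t}"
    proof
      fix z assume "z \<in> (\<lambda>y. y div t) ` ?S"
      then obtain y where y: "y \<in> ?S" "z = y div t" by auto
      then have "0 \<le> y" "y \<le> int m - 1" by auto
      then show "z \<in> {0..(int m - 1) div t}"
        using y tpos by (auto intro: zdiv_mono1 pos_imp_zdiv_nonneg_iff[THEN iffD2])
    qed
    have "card ?S = card ((\<lambda>y. y div t) ` ?S)" using inj by (simp add: card_image)
    also have "\<dots> \<le> card {0..(int m - 1) div t}" by (rule card_mono) (use sub in auto)
    also have "\<dots> = nat ((int m - 1) div t + 1)" by simp
    finally have c1: "card ?S \<le> nat ((int m - 1) div t + 1)" .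
    have nn: "0 \<le> (int m - 1) div t + 1"
    proof -
      have "(-1) div t \<le> (int m - 1) div t" by (rule zdiv_mono1) (use tpos in auto)
      moreover have "(-1::int) div t = -1" using tpos by (simp add: div_eq_minus1)
      ultimately have "-1 \<le> (int m - 1) div t" by simp
      then show ?thesis by simp
    qed
    have "real (card ?S) \<le> real (nat ((int m - 1) div t + 1))" using c1 by (simp only: of_nat_le_iff)
    also have "real (nat ((int m - 1) div t + 1)) = real_of_int ((int m - 1) div t) + 1"
      using nn by simp
    also have "\<dots> \<le> real_of_int (int m - 1) / real_of_int t + 1"
      using real_of_int_div4[of "int m - 1" t] by simp
    also have "\<dots> \<le> real m / real_of_int t + 1"
      using tpos by (intro add_right_mono divide_right_mono) auto
    also have "real m / real_of_int t = real m * real_of_int ?Gb / real s"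
    proof -
      have rs: "real s = real_of_int t * real_of_int ?Gb"
        using st by (metis of_int_mult of_int_of_nat_eq)
      show ?thesis unfolding rs using Gbpos tpos by (simp add: field_simps)
    qed
    also have "real m * real_of_int ?Gb / real s \<le> real m * real_of_int ?G / real s"
    proof -
      have "?Gb dvd ?G"
      proof (rule Gcd_greatest)
        fix w assume "w \<in> insert (int s) (a ` P \<union> b ` P)"
        then consider "w = int s" | c where "c \<in> P" "w = a c" | c where "c \<in> P" "w = b c" by auto
        then show "?Gb dvd w"
        proof cases
          case 1 then show ?thesis using Gbdvd by simp
        next
          case (2 c)
          have "?Gb dvd b c" using 2 by (intro Gcd_dvd) auto
          moreover have "?Gb dvd a c + y0 * b c" using y0 2 Gbdvd dvd_trans by auto
          ultimately have "?Gb dvd (a c + y0 * b c) - y0 * b c" by (intro dvd_diff dvd_mult) auto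
          then show ?thesis using 2 by simp
        next
          case (3 c) then show ?thesis by (intro Gcd_dvd) auto
        qed
      qed
      then have "?Gb \<le> ?G" using Gpos by (rule zdvd_imp_le)
      then show ?thesis using s by (intro divide_right_mono mult_left_mono) auto
    qed
    finally show ?thesis by simp
  qed
qed


definition XX :: "nat \<Rightarrow> nat \<Rightarrow> (nat \<Rightarrow> int) set" where
  "XX m n = PiE {0..<n} (\<lambda>_. {0..<int m})"

definition cop :: "nat \<Rightarrow> nat \<Rightarrow> (nat set \<Rightarrow> int) set \<Rightarrow> bool" where
  "cop n s P \<longleftrightarrow> (\<forall>d::int. d dvd int s \<longrightarrow> (\<forall>c\<in>P. \<forall>T\<in>Pow {0..<n}. d dvd c T) \<longrightarrow> d dvd 1)"

definition HH :: "nat \<Rightarrow> (nat set \<Rightarrow> int) \<Rightarrow> (nat set \<Rightarrow> int)" where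
  "HH n c = (\<lambda>T. c (insert n T))"

lemma eval_upd:
  "mlin_eval n c (g(n := y)) = mlin_eval n c g"
  unfolding mlin_eval_def
proof (intro sum.cong refl arg_cong2[where f = "(*)"] prod.cong)
  fix S i assume "S \<in> Pow {0..<n}" "i \<in> S"
  then have "i \<noteq> n" by auto
  then show "(g(n := y)) i = g i" by simp
qed

lemma eval_split:
  "mlin_eval (Suc n) c x = mlin_eval n c x + x n * mlin_eval n (HH n c) x"
proof -
  have pw: "Pow {0..<Suc n} = Pow {0..<n} \<union> insert n ` Pow {0..<n}"
    by (simp add: atLeast0_lessThan_Suc Pow_insert)
  have disj: "Pow {0..<n} \<inter> insert n ` Pow {0..<n} = {}" by auto
  have inj: "inj_on (insert n) (Pow {0..<n})"
    by (rule inj_onI) (metis Pow_iff atLeastLessThan_iff insert_ident less_irrefl subsetD)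
  have "mlin_eval (Suc n) c x = (\<Sum>S\<in>Pow {0..<n}. c S * (\<Prod>i\<in>S. x i))
        + (\<Sum>S\<in>insert n ` Pow {0..<n}. c S * (\<Prod>i\<in>S. x i))"
    unfolding mlin_eval_def pw by (rule sum.union_disjoint) (use disj in auto)
  also have "(\<Sum>S\<in>insert n ` Pow {0..<n}. c S * (\<Prod>i\<in>S. x i))
      = (\<Sum>T\<in>Pow {0..<n}. c (insert n T) * (\<Prod>i\<in>insert n T. x i))"
    by (subst sum.reindex[OF inj]) simp
  also have "\<dots> = (\<Sum>T\<in>Pow {0..<n}. x n * (c (insert n T) * (\<Prod>i\<in>T. x i)))"
  proof (rule sum.cong[OF refl])
    fix T assume T: "T \<in> Pow {0..<n}"
    then have "n \<notin> T" "finite T" by (auto intro: finite_subset)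
    then show "c (insert n T) * (\<Prod>i\<in>insert n T. x i) = x n * (c (insert n T) * (\<Prod>i\<in>T. x i))"
      by (simp add: prod.insert algebra_simps)
  qed
  also have "\<dots> = x n * mlin_eval n (HH n c) x"
    unfolding mlin_eval_def HH_def by (simp add: sum_distrib_left)
  finally show ?thesis unfolding mlin_eval_def by simp
qed


lemma L2:
  fixes a b :: "'c \<Rightarrow> int"
  assumes s: "s > 0"
  shows "Gcd (insert (int s) (a ` P \<union> b ` P))
       = int (\<Sum>e | e dvd s \<and> (\<forall>c\<in>P. int e dvd a c \<and> int e dvd b c). totient e)"
proof -
  let ?G = "Gcd (insert (int s) (a ` P \<union> b ` P))"
  have G0: "0 \<le> ?G" by simp
  define g where "g = nat ?G"
  have Gg: "?G = int g" unfolding g_def using G0 by simp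
  have "{e. e dvd g} = {e. e dvd s \<and> (\<forall>c\<in>P. int e dvd a c \<and> int e dvd b c)}"
  proof -
    have "e dvd g \<longleftrightarrow> int e dvd ?G" for e unfolding Gg by simp
    also have "int e dvd ?G \<longleftrightarrow> (\<forall>w\<in>insert (int s) (a ` P \<union> b ` P). int e dvd w)" for e
      by (rule dvd_Gcd_iff)
    finally show ?thesis by auto
  qed
  then have "(\<Sum>e | e dvd s \<and> (\<forall>c\<in>P. int e dvd a c \<and> int e dvd b c). totient e) = g"
    using totient_divisor_sum[of g] by simp
  then show ?thesis using Gg by simp
qed

lemma cop_step:
  assumes "cop (Suc n) s P" "e dvd s"
  shows "cop n e (P \<union> HH n ` P)"
  unfolding cop_def
proof (intro allI impI)
  fix d :: int
  assume d1: "d dvd int e" and d2: "\<forall>c\<in>P \<union> HH n ` P. \<forall>T\<in>Pow {0..<n}. d dvd c T"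
  have "d dvd int s" using d1 assms(2) by (meson dvd_trans of_nat_dvd_iff)
  moreover have "\<forall>c\<in>P. \<forall>T\<in>Pow {0..<Suc n}. d dvd c T"
  proof (intro ballI)
    fix c T assume c: "c \<in> P" and T: "T \<in> Pow {0..<Suc n}"
    show "d dvd c T"
    proof (cases "n \<in> T")
      case False
      then have "T \<in> Pow {0..<n}" using T by (auto simp: less_Suc_eq)
      then show ?thesis using d2 c by auto
    next
      case True
      then have T': "T - {n} \<in> Pow {0..<n}" and Teq: "T = insert n (T - {n})" using T by auto
      have "d dvd HH n c (T - {n})" using d2 c T' by auto
      then show ?thesis unfolding HH_def using Teq by simp
    qed
  qed
  ultimately show "d dvd 1" using assms(1) unfolding cop_def by blast
qed

lemma card_split:
  assumes m: "m > 0"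
  shows "card {x \<in> XX m (Suc n). \<forall>c\<in>P. int s dvd mlin_eval (Suc n) c x}
       = (\<Sum>g\<in>XX m n. card {y \<in> {0..<int m}. \<forall>c\<in>P. int s dvd mlin_eval n c g + y * mlin_eval n (HH n c) g})"
proof -
  let ?Y = "{0..<int m}" and ?G = "XX m n"
  let ?Q = "\<lambda>y g. \<forall>c\<in>P. int s dvd mlin_eval n c g + y * mlin_eval n (HH n c) g"
  let ?psi = "\<lambda>(g, y). g(n := y)"
  let ?Sig = "SIGMA g:?G. {y \<in> ?Y. ?Q y g}"
  have XS: "XX m (Suc n) = (\<lambda>(y, g). g(n := y)) ` (?Y \<times> ?G)"
    unfolding XX_def by (simp add: atLeast0_lessThan_Suc PiE_insert_eq)
  have injc: "inj_on (\<lambda>(y, g). g(n := y)) (?Y \<times> ?G)"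
    unfolding XX_def by (rule inj_combinator) simp
  have psi: "?psi = (\<lambda>(y, g). g(n := y)) \<circ> prod.swap" by auto
  have injpsi: "inj_on ?psi (?G \<times> ?Y)"
    unfolding psi
    by (rule comp_inj_on) (auto intro: inj_on_subset[OF injc] simp: product_swap)
  have ev: "mlin_eval (Suc n) c (g(n := y)) = mlin_eval n c g + y * mlin_eval n (HH n c) g" for c g y
    using eval_split[of n c "g(n := y)"] by (simp add: eval_upd)
  have eq: "{x \<in> XX m (Suc n). \<forall>c\<in>P. int s dvd mlin_eval (Suc n) c x} = ?psi ` ?Sig"
  proof
    show "{x \<in> XX m (Suc n). \<forall>c\<in>P. int s dvd mlin_eval (Suc n) c x} \<subseteq> ?psi ` ?Sig"
    proof
      fix x assume x: "x \<in> {x \<in> XX m (Suc n). \<forall>c\<in>P. int s dvd mlin_eval (Suc n) c x}"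
      then obtain y g where yg: "y \<in> ?Y" "g \<in> ?G" "x = g(n := y)" using XS by auto
      then have "?Q y g" using x ev by auto
      then show "x \<in> ?psi ` ?Sig" using yg by force
    qed
    show "?psi ` ?Sig \<subseteq> {x \<in> XX m (Suc n). \<forall>c\<in>P. int s dvd mlin_eval (Suc n) c x}"
    proof
      fix x assume "x \<in> ?psi ` ?Sig"
      then obtain g y where gy: "g \<in> ?G" "y \<in> ?Y" "?Q y g" "x = g(n := y)" by auto
      then have "x \<in> XX m (Suc n)" using XS by force
      then show "x \<in> {x \<in> XX m (Suc n). \<forall>c\<in>P. int s dvd mlin_eval (Suc n) c x}"
        using gy ev by auto
    qed
  qed
  have fG: "finite ?G" unfolding XX_def by (rule finite_PiE) auto
  have "card (?psi ` ?Sig) = card ?Sig"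
    by (rule card_image) (rule inj_on_subset[OF injpsi], auto)
  also have "\<dots> = (\<Sum>g\<in>?G. card {y \<in> ?Y. ?Q y g})"
    using fG by (intro card_SigmaI) (auto intro: finite_subset[of _ "{0..<int m}"])
  finally show ?thesis using eq by simp
qed

lemma sum_swap_count:
  assumes fG: "finite G" and s: "s > 0"
  shows "(\<Sum>g\<in>G. real (\<Sum>e | e dvd s \<and> C e g. totient e))
       = (\<Sum>e | e dvd s. real (totient e) * real (card {g \<in> G. C e g}))"
proof -
  have fD: "finite {e. e dvd s}" using s by (auto intro: finite_divisors_nat)
  have "(\<Sum>g\<in>G. real (\<Sum>e | e dvd s \<and> C e g. totient e))
      = (\<Sum>g\<in>G. \<Sum>e | e dvd s. (if C e g then real (totient e) else 0))"
  proof (rule sum.cong[OF refl])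
    fix g assume "g \<in> G"
    have "(\<Sum>e | e dvd s \<and> C e g. real (totient e)) = (\<Sum>e\<in>{e. e dvd s} \<inter> {e. C e g}. real (totient e))"
      by (rule sum.cong) auto
    also have "\<dots> = (\<Sum>e | e dvd s. (if C e g then real (totient e) else 0))"
      by (subst sum.inter_restrict[OF fD]) simp
    finally show "real (\<Sum>e | e dvd s \<and> C e g. totient e) = (\<Sum>e | e dvd s. (if C e g then real (totient e) else 0))"
      by (simp only: of_nat_sum)
  qed
  also have "\<dots> = (\<Sum>e | e dvd s. \<Sum>g\<in>G. (if C e g then real (totient e) else 0))"
    by (rule sum.swap)
  also have "\<dots> = (\<Sum>e | e dvd s. real (totient e) * real (card {g \<in> G. C e g}))"
  proof (rule sum.cong[OF refl])
    fix e
    have "(\<Sum>g\<in>G. (if C e g then real (totient e) else 0)) = (\<Sum>g\<in>G. real (totient e) * of_bool (C e g))"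
      by (intro sum.cong) auto
    also have "\<dots> = real (totient e) * (\<Sum>g\<in>G. of_bool (C e g))" by (simp add: sum_distrib_left)
    also have "\<dots> = real (totient e) * real (card {g \<in> G. C e g})"
    proof -
      have "G \<inter> {x. C e x} = {g \<in> G. C e g}" by auto
      moreover have "(\<Sum>x\<in>G. of_bool (C e x)) = (of_nat (card (G \<inter> {x. C e x})) :: real)"
        using fG by simp
      ultimately show ?thesis by (simp only:)
    qed
    finally show "(\<Sum>g\<in>G. (if C e g then real (totient e) else 0)) = real (totient e) * real (card {g \<in> G. C e g})" .
  qed
  finally show ?thesis .
qed


lemma core:
  assumes m: "m > 0"
  shows "finite P \<Longrightarrow> s > 0 \<Longrightarrow> cop n s P \<Longrightarrow>
    real (card {x \<in> XX m n. \<forall>c\<in>P. int s dvd mlin_eval n c x})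
      \<le> real m ^ n * (real n / real m + real (tau n s) / real s)"
proof (induction n arbitrary: s P)
  case 0
  let ?A = "{x \<in> XX m 0. \<forall>c\<in>P. int s dvd mlin_eval 0 c x}"
  have X0: "XX m 0 = {\<lambda>_. undefined}" unfolding XX_def by simp
  have ev0: "mlin_eval 0 c x = c {}" for c x unfolding mlin_eval_def by simp
  show ?case
  proof (cases "s = 1")
    case True
    have "card ?A \<le> card (XX m 0)" by (rule card_mono) (auto simp: X0)
    then have "card ?A \<le> 1" by (simp add: X0)
    then show ?thesis using True by simp
  next
    case False
    have "?A = {}"
    proof (rule ccontr)
      assume "?A \<noteq> {}"
      then obtain x where "x \<in> ?A" by blast
      then have "\<forall>c\<in>P. int s dvd c {}" by (simp add: ev0)
      then have h: "\<forall>c\<in>P. \<forall>T\<in>Pow {0..<0}. int s dvd c T" by simp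
      have "int s dvd int s \<longrightarrow> (\<forall>c\<in>P. \<forall>T\<in>Pow {0..<0}. int s dvd c T) \<longrightarrow> int s dvd 1"
        using "0.prems"(3) unfolding cop_def by (rule allE)
      then have "int s dvd int 1" using h by simp
      then have "s dvd 1" by (simp only: int_dvd_int_iff)
      then show False using False by simp
    qed
    then have "card ?A = 0" by (simp only: card.empty)
    moreover have "tau 0 s = 0" using False by simp
    ultimately show ?thesis by simp
  qed
next
  case (Suc n)
  let ?P' = "P \<union> HH n ` P"
  let ?G = "XX m n"
  let ?D = "{e. e dvd s}"
  let ?C = "\<lambda>e g. \<forall>c\<in>?P'. int e dvd mlin_eval n c g"
  have s: "s > 0" using Suc.prems by simp
  have finP: "finite P" using Suc.prems by simp
  have fG: "finite ?G" unfolding XX_def by (rule finite_PiE) auto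
  have cardG: "card ?G = m ^ n" unfolding XX_def by (simp add: card_PiE)
  have fD: "finite ?D" using s by (auto intro: finite_divisors_nat)
  have step1: "real (card {y \<in> {0..<int m}. \<forall>c\<in>P. int s dvd mlin_eval n c g + y * mlin_eval n (HH n c) g})
      \<le> 1 + real m * real (\<Sum>e | e dvd s \<and> ?C e g. totient e) / real s" for g
  proof -
    have "real (card {y \<in> {0..<int m}. \<forall>c\<in>P. int s dvd mlin_eval n c g + y * mlin_eval n (HH n c) g})
      \<le> 1 + real m * of_int (Gcd (insert (int s) ((\<lambda>c. mlin_eval n c g) ` P \<union> (\<lambda>c. mlin_eval n (HH n c) g) ` P))) / real s"
      by (rule L1[OF finP s])
    also have "Gcd (insert (int s) ((\<lambda>c. mlin_eval n c g) ` P \<union> (\<lambda>c. mlin_eval n (HH n c) g) ` P))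
       = int (\<Sum>e | e dvd s \<and> (\<forall>c\<in>P. int e dvd mlin_eval n c g \<and> int e dvd mlin_eval n (HH n c) g). totient e)"
      by (rule L2[OF s])
    also have "{e. e dvd s \<and> (\<forall>c\<in>P. int e dvd mlin_eval n c g \<and> int e dvd mlin_eval n (HH n c) g)}
        = {e. e dvd s \<and> ?C e g}" by auto
    finally show ?thesis by simp
  qed
  have IH: "real (card {g \<in> ?G. ?C e g}) \<le> real m ^ n * (real n / real m + real (tau n e) / real e)"
    if e: "e \<in> ?D" for e
  proof -
    have "e > 0" using e s by (auto intro: dvd_pos_nat)
    moreover have "cop n e ?P'" using Suc.prems e by (intro cop_step) auto
    moreover have "finite ?P'" using finP by simp
    ultimately show ?thesis using Suc.IH by blast
  qed
  have "real (card {x \<in> XX m (Suc n). \<forall>c\<in>P. int s dvd mlin_eval (Suc n) c x})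
      = (\<Sum>g\<in>?G. real (card {y \<in> {0..<int m}. \<forall>c\<in>P. int s dvd mlin_eval n c g + y * mlin_eval n (HH n c) g}))"
    using card_split[OF m, of n P s] by simp
  also have "\<dots> \<le> (\<Sum>g\<in>?G. 1 + real m * real (\<Sum>e | e dvd s \<and> ?C e g. totient e) / real s)"
    by (rule sum_mono) (rule step1)
  also have "\<dots> = (\<Sum>g\<in>?G. 1 + real m / real s * real (\<Sum>e | e dvd s \<and> ?C e g. totient e))"
    by (rule sum.cong[OF refl]) (simp add: field_simps)
  also have "\<dots> = (\<Sum>g\<in>?G. 1) + (\<Sum>g\<in>?G. real m / real s * real (\<Sum>e | e dvd s \<and> ?C e g. totient e))"
    by (rule sum.distrib)
  also have "\<dots> = real (card ?G) + real m / real s * (\<Sum>g\<in>?G. real (\<Sum>e | e dvd s \<and> ?C e g. totient e))"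
    by (simp only: sum_distrib_left[symmetric]) simp
  finally have main: "real (card {x \<in> XX m (Suc n). \<forall>c\<in>P. int s dvd mlin_eval (Suc n) c x})
     \<le> real (card ?G) + real m / real s * (\<Sum>g\<in>?G. real (\<Sum>e | e dvd s \<and> ?C e g. totient e))" .
  have h1: "(\<Sum>g\<in>?G. real (\<Sum>e | e dvd s \<and> ?C e g. totient e))
      = (\<Sum>e\<in>?D. real (totient e) * real (card {g \<in> ?G. ?C e g}))"
    by (rule sum_swap_count[OF fG s])
  have h2: "(\<Sum>e\<in>?D. real (totient e) * real (card {g \<in> ?G. ?C e g}))
      \<le> (\<Sum>e\<in>?D. real (totient e) * (real m ^ n * (real n / real m + real (tau n e) / real e)))"
    by (rule sum_mono) (intro mult_left_mono IH, auto)
  have h3: "(\<Sum>e\<in>?D. real (totient e) * (real m ^ n * (real n / real m + real (tau n e) / real e)))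
      = real m ^ n * (real n / real m) * (\<Sum>e\<in>?D. real (totient e))
        + real m ^ n * (\<Sum>e\<in>?D. real (totient e) * real (tau n e) / real e)"
  proof -
    have "(\<Sum>e\<in>?D. real (totient e) * (real m ^ n * (real n / real m + real (tau n e) / real e)))
      = (\<Sum>e\<in>?D. real m ^ n * (real n / real m) * real (totient e)
           + real m ^ n * (real (totient e) * real (tau n e) / real e))"
      by (rule sum.cong[OF refl]) (simp add: algebra_simps)
    also have "\<dots> = (\<Sum>e\<in>?D. real m ^ n * (real n / real m) * real (totient e))
           + (\<Sum>e\<in>?D. real m ^ n * (real (totient e) * real (tau n e) / real e))"
      by (rule sum.distrib)
    also have "\<dots> = real m ^ n * (real n / real m) * (\<Sum>e\<in>?D. real (totient e))
        + real m ^ n * (\<Sum>e\<in>?D. real (totient e) * real (tau n e) / real e)"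
      by (simp only: sum_distrib_left)
    finally show ?thesis .
  qed
  have h4: "(\<Sum>e\<in>?D. real (totient e)) = real s"
    using totient_divisor_sum[of s] by (metis of_nat_sum)
  have h5: "(\<Sum>e\<in>?D. real (totient e) * real (tau n e) / real e) \<le> (\<Sum>e\<in>?D. real (tau n e))"
  proof (rule sum_mono)
    fix e assume e: "e \<in> ?D"
    then have e0: "e > 0" using s by (auto intro: dvd_pos_nat)
    have "real (totient e) \<le> real e" by (simp add: totient_le)
    then have "real (totient e) * real (tau n e) \<le> real e * real (tau n e)" by (intro mult_right_mono) auto
    then show "real (totient e) * real (tau n e) / real e \<le> real (tau n e)"
      using e0 by (simp add: field_simps)
  qed
  have h6: "(\<Sum>e\<in>?D. real (tau n e)) = real (tau (Suc n) s)" by (simp only: tau.simps of_nat_sum)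
  have "real m ^ n * (\<Sum>e\<in>?D. real (totient e) * real (tau n e) / real e) \<le> real m ^ n * real (tau (Suc n) s)"
    by (rule mult_left_mono[OF h5[unfolded h6]]) simp
  then have inner: "(\<Sum>g\<in>?G. real (\<Sum>e | e dvd s \<and> ?C e g. totient e))
     \<le> real m ^ n * (real n / real m) * real s + real m ^ n * real (tau (Suc n) s)"
  proof -
    have "(\<Sum>g\<in>?G. real (\<Sum>e | e dvd s \<and> ?C e g. totient e))
      \<le> real m ^ n * (real n / real m) * (\<Sum>e\<in>?D. real (totient e))
        + real m ^ n * (\<Sum>e\<in>?D. real (totient e) * real (tau n e) / real e)"
      using h1 h2 h3 by (simp only:)
    then show ?thesis using h4 \<open>real m ^ n * (\<Sum>e\<in>?D. real (totient e) * real (tau n e) / real e) \<le> real m ^ n * real (tau (Suc n) s)\<close>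
      by (simp only:)
  qed
  have "real m / real s * (\<Sum>g\<in>?G. real (\<Sum>e | e dvd s \<and> ?C e g. totient e))
     \<le> real m / real s * (real m ^ n * (real n / real m) * real s + real m ^ n * real (tau (Suc n) s))"
    by (rule mult_left_mono[OF inner]) simp
  with main have "real (card {x \<in> XX m (Suc n). \<forall>c\<in>P. int s dvd mlin_eval (Suc n) c x})
     \<le> real (m ^ n) + real m / real s * (real m ^ n * (real n / real m) * real s + real m ^ n * real (tau (Suc n) s))"
    using cardG by simp
  also have "\<dots> = real m ^ Suc n * (real (Suc n) / real m + real (tau (Suc n) s) / real s)"
    using m s by (simp add: field_simps)
  finally show ?case .
qed


theorem mainTheorem6:
  fixes \<mu> lam m :: nat and N :: int and c :: "nat set \<Rightarrow> int"
  assumes "\<mu> \<ge> 2" and "lam \<ge> 1" and "N > 0"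
    and "log 2 (real_of_int N) \<ge> 8 * real \<mu> ^ 2 + log 2 (2 * real \<mu>) * real lam"
    and "m > 0"
    and "mlin_coprime_to \<mu> c N"
  shows "real (card {x \<in> PiE {0..<\<mu>} (\<lambda>_. {0..<int m}). N dvd mlin_eval \<mu> c x})
           / real (card (PiE {0..<\<mu>} (\<lambda>_. {0..<int m})))
         \<le> 2 powr (- real lam) + real \<mu> / real m"
proof -
  obtain k where k0: "\<mu> = Suc k" using assms(1) by (cases \<mu>) auto
  then have k: "\<mu> = Suc k" "k \<ge> 1" using assms(1) by auto
  define D where "D = nat N"
  have ND: "N = int D" unfolding D_def using assms(3) by simp
  have D0: "D > 0" using assms(3) ND by simp
  have cop: "cop \<mu> D {c}"
    unfolding cop_def
  proof (intro allI impI)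
    fix d :: int
    assume d1: "d dvd int D" and d2: "\<forall>c'\<in>{c}. \<forall>T\<in>Pow {0..<\<mu>}. d dvd c' T"
    have h: "d dvd Gcd (insert N (c ` Pow {0..<\<mu>}))"
      unfolding dvd_Gcd_iff using d1 d2 ND by auto
    have "Gcd (insert N (c ` Pow {0..<\<mu>})) = 1" using assms(6) unfolding mlin_coprime_to_def .
    with h show "d dvd 1" by (simp only:)
  qed
  have setEq: "{x \<in> PiE {0..<\<mu>} (\<lambda>_. {0..<int m}). N dvd mlin_eval \<mu> c x}
      = {x \<in> XX m \<mu>. \<forall>c'\<in>{c}. int D dvd mlin_eval \<mu> c' x}"
    unfolding XX_def ND by simp
  have cardX: "card (PiE {0..<\<mu>} (\<lambda>_. {0..<int m})) = m ^ \<mu>"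
    by (simp add: card_PiE)
  have C: "real (card {x \<in> XX m \<mu>. \<forall>c'\<in>{c}. int D dvd mlin_eval \<mu> c' x})
      \<le> real m ^ \<mu> * (real \<mu> / real m + real (tau \<mu> D) / real D)"
    by (rule core[OF assms(5)]) (use D0 cop in auto)
  have mpos: "real m ^ \<mu> > 0" using assms(5) by simp
  have ratio: "real (card {x \<in> PiE {0..<\<mu>} (\<lambda>_. {0..<int m}). N dvd mlin_eval \<mu> c x})
           / real (card (PiE {0..<\<mu>} (\<lambda>_. {0..<int m})))
        \<le> real \<mu> / real m + real (tau \<mu> D) / real D"
    unfolding setEq cardX using C mpos by (simp add: divide_le_eq mult.commute)
  have logD: "log 2 (real D) \<ge> 8 * real (Suc k) ^ 2 + LL k * real lam"
    using assms(4) ND k unfolding LL_def by simp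
  have "real (tau (Suc k) D) / real D \<le> 2 powr (- real lam)"
    by (rule tau_ratio[OF k(2) D0 logD])
  then show ?thesis using ratio k by simp
qed

end
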